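(* Fix an agent $k$ and coefficients $W_{i,j}\in[-1,1]$, $i,j\in[m_k]$, and suppose there are $\varepsilon'\ge\varepsilon''\ge0$ with $W_{i,i}\ge\max\{W_{i,j}-\varepsilon',-\varepsilon''\}$ for all $i,j$. Let $\hat q^*$ be any optimal solution of $(P^4)$. Then $\hat q^*$ is also an optimal solution of $(P^3)$. Moreover, if $(\hat\lambda^*,\hat\mu^*,\hat\pi^* )$ are Lagrange multipliers satisfying the KKT conditions of $(P^4)$ at $\hat q^*$, then there exists $\lambda^*=(\lambda^*_{i,j})_{i,j}$ such that $(\lambda^*,\mu^*=\hat\mu^*,\pi^*=\hat\pi^* )$ satisfies the KKT conditions of $(P^3)$ at $q^*=\hat q^*$.
   Context: Agent $k$ has finite type support $\{t_k^{(1)},\dots,t_k^{(m_k)}\}$ with probabilities $F_i>0$; $m=\max_{k'}m_{k'}$. With $\gamma>0$ and $\phi(\mathbf{q})=\frac12\gamma\|\mathbf{q}\|_2^2$: program $(P^3)$ maximizes $\sum_iF_i(\sum_jW_{i,j}q_{i,j}-\phi(\mathbf{q}_i))$ subject to $\sum_jq_{i,j}=1$ ($\forall i$), $\sum_iF_iq_{i,j}=F_j$ ($\forall j$), $q_{i,j}\ge0$. Program $(P^4)$ is the same with $W_{i,j}$ replaced by $\hat W_{i,j}=W_{i,j}$ if $W_{i,j}\ge-m(\varepsilon'+2\gamma)-\varepsilon''$ and $\hat W_{i,j}=-m(\varepsilon'+2\gamma)-\varepsilon''$ otherwise. KKT conditions of a program with coefficients $V_{i,j}$ (either $W$ or $\hat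 W$) at solution $q$ with multipliers $(\lambda,\mu,\pi)$: (1) $F_i(V_{i,j}-\partial\phi(\mathbf{q}_i)/\partial q_{i,j})=\lambda_{i,j}+\mu_i+F_i\pi_j$; (2) $\lambda_{i,j}\le0$; (3) $\lambda_{i,j}q_{i,j}=0$, for all $i,j$. *)

theory Defs
  imports Complex_Main
begin

text \<open>Types of agent k are indexed by 0..<n (n = m_k). Matrices are nat => nat => real,
  only entries with indices < n matter.\<close>

definition phi :: "real \<Rightarrow> nat \<Rightarrow> (nat \<Rightarrow> real) \<Rightarrow> real" where
  "phi \<gamma> n qi = \<gamma> / 2 * (\<Sum>j<n. (qi j)^2)"

definition feasible :: "nat \<Rightarrow> (nat \<Rightarrow> real) \<Rightarrow> (nat \<Rightarrow> nat \<Rightarrow> real) \<Rightarrow> bool" where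
  "feasible n F q \<longleftrightarrow>
     (\<forall>i<n. (\<Sum>j<n. q i j) = 1) \<and>
     (\<forall>j<n. (\<Sum>i<n. F i * q i j) = F j) \<and>
     (\<forall>i<n. \<forall>j<n. q i j \<ge> 0)"

definition objective :: "nat \<Rightarrow> real \<Rightarrow> (nat \<Rightarrow> real) \<Rightarrow> (nat \<Rightarrow> nat \<Rightarrow> real)
    \<Rightarrow> (nat \<Rightarrow> nat \<Rightarrow> real) \<Rightarrow> real" where
  "objective n \<gamma> F V q = (\<Sum>i<n. F i * ((\<Sum>j<n. V i j * q i j) - phi \<gamma> n (q i)))"

definition optimal :: "nat \<Rightarrow> real \<Rightarrow> (nat \<Rightarrow> real) \<Rightarrow> (nat \<Rightarrow> nat \<Rightarrow> real)
    \<Rightarrow> (nat \<Rightarrow> nat \<Rightarrow> real) \<Rightarrow> bool" where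
  "optimal n \<gamma> F V q \<longleftrightarrow> feasible n F q \<and>
     (\<forall>q'. feasible n F q' \<longrightarrow> objective n \<gamma> F V q' \<le> objective n \<gamma> F V q)"

text \<open>Truncated coefficients \<hat>W of (P^4); m is the global max number of types.\<close>
definition Wtrunc :: "nat \<Rightarrow> real \<Rightarrow> real \<Rightarrow> real \<Rightarrow> (nat \<Rightarrow> nat \<Rightarrow> real) \<Rightarrow> nat \<Rightarrow> nat \<Rightarrow> real" where
  "Wtrunc m \<gamma> e1 e2 W i j =
     (if W i j \<ge> - real m * (e1 + 2*\<gamma>) - e2 then W i j else - real m * (e1 + 2*\<gamma>) - e2)"

text \<open>KKT conditions; the partial derivative of phi(q_i) w.r.t. q_{i,j} is gamma * q_{i,j}.\<close>
definition KKT :: "nat \<Rightarrow> real \<Rightarrow> (nat \<Rightarrow> real) \<Rightarrow> (nat \<Rightarrow> nat \<Rightarrow> real) \<Rightarrow> (nat \<Rightarrow> nat \<Rightarrow> real)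
    \<Rightarrow> (nat \<Rightarrow> nat \<Rightarrow> real) \<Rightarrow> (nat \<Rightarrow> real) \<Rightarrow> (nat \<Rightarrow> real) \<Rightarrow> bool" where
  "KKT n \<gamma> F V q lam mu piv \<longleftrightarrow>
     (\<forall>i<n. \<forall>j<n.
        F i * (V i j - \<gamma> * q i j) = lam i j + mu i + F i * piv j \<and>
        lam i j \<le> 0 \<and> lam i j * q i j = 0)"

end

theory Submission
  imports Defs
begin

definition walk :: "nat \<Rightarrow> (nat \<Rightarrow> nat \<Rightarrow> real) \<Rightarrow> (nat \<Rightarrow> nat) \<Rightarrow> nat \<Rightarrow> bool" where
  "walk n q w l \<longleftrightarrow> (\<forall>k\<le>l. w k < n) \<and> (\<forall>k<l. q (w k) (w (Suc k)) > 0)"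

lemma walk_short:
  assumes "walk n q w l"
  shows "\<exists>w' l'. walk n q w' l' \<and> w' 0 = w 0 \<and> w' l' = w l \<and> l' < n"
  using assms
proof (induction l arbitrary: w rule: less_induct)
  case (less l)
  show ?case
  proof (cases "l < n")
    case True then show ?thesis using less.prems by blast
  next
    case False
    have sub: "w ` {..l} \<subseteq> {..<n}" using less.prems unfolding walk_def by auto
    have "\<not> inj_on w {..l}"
    proof
      assume "inj_on w {..l}"
      from card_inj_on_le[OF this sub] False show False by simp
    qed
    then obtain i j where ij: "i \<le> l" "j \<le> l" "i \<noteq> j" "w i = w j"
      unfolding inj_on_def by auto
    obtain i j where ij: "i < j" "j \<le> l" "w i = w j"
      using ij by (metis linorder_neqE_nat order.strict_trans1)
    define w' where "w' k = (if k \<le> i then w k else w (k + (j - i)))" for k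
    define l' where "l' = l - (j - i)"
    have W: "walk n q w' l'"
      unfolding walk_def
    proof (intro conjI allI impI)
      fix k assume "k \<le> l'"
      then show "w' k < n" using less.prems ij unfolding walk_def w'_def l'_def by auto
    next
      fix k assume k: "k < l'"
      have wl: "\<forall>k<l. q (w k) (w (Suc k)) > 0" using less.prems unfolding walk_def by auto
      consider "k < i" | "k = i" | "k > i" by linarith
      then show "q (w' k) (w' (Suc k)) > 0"
      proof cases
        case 1 then show ?thesis using wl ij k unfolding w'_def l'_def by auto
      next
        case 2
        have "j < l" using k 2 ij unfolding l'_def by linarith
        then have "q (w j) (w (Suc j)) > 0" using wl by auto
        moreover have "Suc k + (j - i) = Suc j" using 2 ij by linarith
        ultimately show ?thesis using 2 ij unfolding w'_def by auto
      next
        case 3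
        have "k + (j - i) < l" using k 3 ij unfolding l'_def by linarith
        then have "q (w (k + (j - i))) (w (Suc (k + (j - i)))) > 0" using wl by auto
        then show ?thesis using 3 unfolding w'_def by auto
      qed
    qed
    have "l' < l" using ij unfolding l'_def by linarith
    from less.IH[OF this W] obtain w'' l'' where
      "walk n q w'' l''" "w'' 0 = w' 0" "w'' l'' = w' l'" "l'' < n" by blast
    moreover have "w' 0 = w 0" unfolding w'_def by simp
    moreover have "w' l' = w l"
    proof (cases "l' \<le> i")
      case True then have "l' = i" "j = l" using ij unfolding l'_def by linarith+
      then show ?thesis using ij unfolding w'_def by simp
    next
      case False then show ?thesis using ij unfolding w'_def l'_def by simp
    qed
    ultimately show ?thesis by metis
  qed
qed

lemma reach:
  assumes feas: "feasible n F q" and Fpos: "\<forall>i<n. F i > 0"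
    and i0: "i0 < n" and j0: "j0 < n" and qp: "q i0 j0 > 0"
  shows "\<exists>w l. walk n q w l \<and> w 0 = j0 \<and> w l = i0"
proof (rule ccontr)
  assume nr: "\<not> ?thesis"
  define R where "R = {v. v < n \<and> (\<exists>w l. walk n q w l \<and> w 0 = j0 \<and> w l = v)}"
  define N where "N = {..<n}"
  have RN: "R \<subseteq> N" unfolding R_def N_def by auto
  have fin: "finite N" "finite R" "finite (N - R)" using RN finite_subset unfolding N_def by auto
  have j0R: "j0 \<in> R" unfolding R_def walk_def using j0 by (intro CollectI conjI exI[of _ "\<lambda>_. j0"] exI[of _ 0]) auto
  have i0R: "i0 \<in> N - R" using nr i0 unfolding R_def N_def by auto
  have qnn: "\<forall>a<n. \<forall>b<n. q a b \<ge> 0" using feas unfolding feasible_def by auto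
  have clos: "b \<in> R" if "a \<in> R" "b < n" "q a b > 0" for a b
  proof -
    from that obtain w l where w: "walk n q w l" "w 0 = j0" "w l = a" unfolding R_def by auto
    define w' where "w' = w(Suc l := b)"
    have "walk n q w' (Suc l)" using w that unfolding walk_def w'_def
      by (auto simp: le_Suc_eq less_Suc_eq)
    moreover have "w' 0 = j0" "w' (Suc l) = b" using w unfolding w'_def by auto
    ultimately show ?thesis using that unfolding R_def by blast
  qed
  define x where "x a b = F a * q a b" for a b
  have out0: "(\<Sum>a\<in>R. \<Sum>b\<in>N-R. x a b) = 0"
  proof (intro sum.neutral ballI)
    fix a b assume ab: "a \<in> R" "b \<in> N - R"
    have "a < n" "b < n" using ab RN unfolding N_def by auto
    then have "q a b = 0" using clos[of a b] ab qnn by force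
    then show "x a b = 0" unfolding x_def by simp
  qed
  have xnn: "x a b \<ge> 0" if "a \<in> N" "b \<in> N" for a b
    using that qnn Fpos unfolding x_def N_def by (simp add: less_imp_le)
  have "x i0 j0 \<le> (\<Sum>a\<in>N-R. x a j0)"
    by (rule member_le_sum) (use i0R j0R xnn RN fin in auto)
  also have "\<dots> \<le> (\<Sum>b\<in>R. \<Sum>a\<in>N-R. x a b)"
    by (rule member_le_sum[where f="\<lambda>b. \<Sum>a\<in>N-R. x a b"]) (use j0R xnn RN fin in \<open>auto intro!: sum_nonneg\<close>)
  finally have inpos: "(\<Sum>b\<in>R. \<Sum>a\<in>N-R. x a b) > 0"
    using qp Fpos i0 unfolding x_def by (smt (verit) mult_pos_pos)
  have rows: "(\<Sum>b\<in>N. x a b) = F a" if "a \<in> N" for a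
    using feas that unfolding feasible_def x_def N_def by (simp add: sum_distrib_left[symmetric])
  have cols: "(\<Sum>a\<in>N. x a b) = F b" if "b \<in> N" for b
    using feas that unfolding feasible_def x_def N_def by simp
  have "(\<Sum>a\<in>R. F a) = (\<Sum>a\<in>R. \<Sum>b\<in>N. x a b)" using rows RN by (intro sum.cong) auto
  also have "\<dots> = (\<Sum>a\<in>R. \<Sum>b\<in>R. x a b) + (\<Sum>a\<in>R. \<Sum>b\<in>N-R. x a b)"
    by (simp add: sum.subset_diff[OF RN fin(1)] sum.distrib add.commute)
  finally have e1: "(\<Sum>a\<in>R. F a) = (\<Sum>a\<in>R. \<Sum>b\<in>R. x a b)" using out0 by simp
  have "(\<Sum>b\<in>R. F b) = (\<Sum>b\<in>R. \<Sum>a\<in>N. x a b)" using cols RN by (intro sum.cong) auto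
  also have "\<dots> = (\<Sum>b\<in>R. \<Sum>a\<in>R. x a b) + (\<Sum>b\<in>R. \<Sum>a\<in>N-R. x a b)"
    by (simp add: sum.subset_diff[OF RN fin(1)] sum.distrib add.commute)
  also have "(\<Sum>b\<in>R. \<Sum>a\<in>R. x a b) = (\<Sum>a\<in>R. \<Sum>b\<in>R. x a b)" by (rule sum.swap)
  finally show False using e1 inpos by simp
qed

lemma improve:
  fixes n L :: nat and \<gamma> :: real and F :: "nat \<Rightarrow> real" and V q :: "nat \<Rightarrow> nat \<Rightarrow> real"
    and p :: "nat \<Rightarrow> nat"
  assumes feas: "feasible n F q" and Fpos: "\<forall>i<n. F i > 0" and g: "\<gamma> > 0"
    and pn: "\<forall>k\<le>L. p k < n" and cyc: "p L = p 0" and pos: "\<forall>k<L. q (p k) (p (Suc k)) > 0"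
    and A: "(\<Sum>k<L. (V (p k) (p k) - \<gamma> * q (p k) (p k)) - (V (p k) (p (Suc k)) - \<gamma> * q (p k) (p (Suc k)))) > 0"
  shows "\<exists>q'. feasible n F q' \<and> objective n \<gamma> F V q' > objective n \<gamma> F V q"
proof -
  define E where "E a b = (\<Sum>k<L. if a = p k then (if b = a then 1 else 0) - (if b = p (Suc k) then 1 else 0) else (0::real))" for a b
  define D where "D a b = E a b / F a" for a b
  have n0: "n > 0" using pn by auto
  have qnn: "\<forall>a<n. \<forall>b<n. q a b \<ge> 0" using feas unfolding feasible_def by auto
  have rowE: "(\<Sum>b<n. E a b) = 0" if "a < n" for a
  proof -
    have "(\<Sum>b<n. E a b) = (\<Sum>k<L. \<Sum>b<n. if a = p k then (if b = a then 1 else 0) - (if b = p (Suc k) then 1 else 0) else (0::real))"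
      unfolding E_def by (rule sum.swap)
    also have "\<dots> = 0"
    proof (rule sum.neutral, intro ballI)
      fix k assume k: "k \<in> {..<L}"
      have "p (Suc k) < n" using pn k by auto
      then show "(\<Sum>b<n. if a = p k then (if b = a then 1 else 0) - (if b = p (Suc k) then 1 else 0) else (0::real)) = 0"
        using that by (cases "a = p k") (simp_all add: sum_subtractf)
    qed
    finally show ?thesis .
  qed
  have colE: "(\<Sum>a<n. E a b) = 0" if "b < n" for b
  proof -
    have "(\<Sum>a<n. E a b) = (\<Sum>k<L. \<Sum>a<n. if a = p k then (if b = a then 1 else 0) - (if b = p (Suc k) then 1 else 0) else (0::real))"
      unfolding E_def by (rule sum.swap)
    also have "\<dots> = (\<Sum>k<L. (if b = p k then 1 else 0) - (if b = p (Suc k) then 1 else (0::real)))"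
    proof (intro sum.cong refl)
      fix k assume k: "k \<in> {..<L}"
      have "p k < n" using pn k by auto
      then show "(\<Sum>a<n. if a = p k then (if b = a then 1 else 0) - (if b = p (Suc k) then 1 else 0) else (0::real)) = (if b = p k then 1 else 0) - (if b = p (Suc k) then 1 else (0::real))"
        by (simp add: sum.delta)
    qed
    also have "\<dots> = - (\<Sum>k<L. (if b = p (Suc k) then 1 else 0) - (if b = p k then 1 else (0::real)))"
      by (simp add: sum_negf[symmetric])
    also have "\<dots> = 0" by (subst sum_lessThan_telescope) (simp add: cyc)
    finally show ?thesis .
  qed
  have Eneg: "q a b > 0" if ab: "a < n" "b < n" "E a b < 0" for a b
  proof -
    have "\<exists>k\<in>{..<L}. (if a = p k then (if b = a then 1 else 0) - (if b = p (Suc k) then 1 else 0) else (0::real)) < 0"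
    proof (rule ccontr)
      assume "\<not> ?thesis"
      then have "E a b \<ge> 0" unfolding E_def by (intro sum_nonneg) (auto simp: not_less)
      then show False using ab by simp
    qed
    then obtain k where k: "k < L" "a = p k" "b \<noteq> a" "b = p (Suc k)"
      by (auto split: if_splits)
    then show ?thesis using pos by auto
  qed
  have Dneg: "q a b > 0" if ab: "a < n" "b < n" "D a b < 0" for a b
  proof -
    have "E a b < 0" using ab Fpos unfolding D_def by (auto simp: divide_less_0_iff)
    then show ?thesis using Eneg ab by auto
  qed
  define r where "r = (\<lambda>(a,b). if D a b < 0 then q a b / (- D a b) else 1)"
  define t0 where "t0 = Min (r ` ({..<n} \<times> {..<n}))"
  have t0pos: "t0 > 0" unfolding t0_def
  proof (subst Min_gr_iff)
    show "finite (r ` ({..<n} \<times> {..<n}))" by simp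
    show "r ` ({..<n} \<times> {..<n}) \<noteq> {}" using n0 by auto
    show "\<forall>x\<in>r ` ({..<n} \<times> {..<n}). 0 < x"
      using Dneg unfolding r_def by (auto simp: divide_less_0_iff)
  qed
  have feast: "feasible n F (\<lambda>a b. q a b + t * D a b)" if t: "0 \<le> t" "t \<le> t0" for t
    unfolding feasible_def
  proof (intro conjI allI impI)
    fix i assume i: "i < n"
    have "(\<Sum>j<n. q i j + t * D i j) = (\<Sum>j<n. q i j) + t / F i * (\<Sum>j<n. E i j)"
      by (simp add: sum.distrib sum_distrib_left D_def)
    then show "(\<Sum>j<n. q i j + t * D i j) = 1" using feas i rowE unfolding feasible_def by simp
  next
    fix j assume j: "j < n"
    have "(\<Sum>i<n. F i * (q i j + t * D i j)) = (\<Sum>i<n. F i * q i j) + t * (\<Sum>i<n. E i j)"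
      by (simp add: sum.distrib sum_distrib_left D_def algebra_simps) (intro sum.cong refl, use Fpos in auto)
    then show "(\<Sum>i<n. F i * (q i j + t * D i j)) = F j" using feas j colE unfolding feasible_def by simp
  next
    fix i j assume ij: "i < n" "j < n"
    show "q i j + t * D i j \<ge> 0"
    proof (cases "D i j < 0")
      case False then show ?thesis using qnn ij t by simp
    next
      case True
      have "t0 \<le> r (i, j)" unfolding t0_def using ij by (intro Min_le) auto
      then have "t \<le> q i j / (- D i j)" using True t unfolding r_def by simp
      then have "t * (- D i j) \<le> q i j" using True by (subst (asm) pos_le_divide_eq) auto
      then show ?thesis by simp
    qed
  qed
  define c where "c a b = V a b - \<gamma> * q a b" for a b
  define A' where "A' = (\<Sum>a<n. F a * (\<Sum>b<n. c a b * D a b))"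
  define B where "B = \<gamma> / 2 * (\<Sum>a<n. F a * (\<Sum>b<n. (D a b)^2))"
  have Bnn: "B \<ge> 0" unfolding B_def using g Fpos
    by (intro mult_nonneg_nonneg sum_nonneg) (auto simp: less_imp_le)
  have expand: "objective n \<gamma> F V (\<lambda>a b. q a b + t * D a b) = objective n \<gamma> F V q + t * A' - t^2 * B" for t
  proof -
    have row: "F a * ((\<Sum>b<n. V a b * (q a b + t * D a b)) - \<gamma> / 2 * (\<Sum>b<n. (q a b + t * D a b)^2))
      = F a * ((\<Sum>b<n. V a b * q a b) - \<gamma> / 2 * (\<Sum>b<n. (q a b)^2)) + t * (F a * (\<Sum>b<n. c a b * D a b))
        - t^2 * (\<gamma> / 2 * (F a * (\<Sum>b<n. (D a b)^2)))" for a
    proof -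
      have s1: "(\<Sum>b<n. V a b * (q a b + t * D a b)) = (\<Sum>b<n. V a b * q a b) + t * (\<Sum>b<n. V a b * D a b)"
        by (simp add: algebra_simps sum.distrib sum_distrib_left)
      have s2: "(\<Sum>b<n. (q a b + t * D a b)^2) = (\<Sum>b<n. (q a b)^2) + 2 * t * (\<Sum>b<n. q a b * D a b) + t^2 * (\<Sum>b<n. (D a b)^2)"
        by (simp add: power2_sum power_mult_distrib algebra_simps sum.distrib sum_distrib_left)
      have s3: "(\<Sum>b<n. c a b * D a b) = (\<Sum>b<n. V a b * D a b) - \<gamma> * (\<Sum>b<n. q a b * D a b)"
        unfolding c_def by (simp add: algebra_simps sum_subtractf sum_distrib_left)
      show ?thesis unfolding s1 s2 s3 by (simp add: algebra_simps)
    qed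
    show ?thesis unfolding objective_def phi_def row A'_def B_def
      by (simp add: sum.distrib sum_subtractf sum_distrib_left)
  qed
  have AA: "A' = (\<Sum>k<L. c (p k) (p k) - c (p k) (p (Suc k)))"
  proof -
    have "A' = (\<Sum>a<n. \<Sum>b<n. c a b * E a b)"
      unfolding A'_def D_def using Fpos
      by (intro sum.cong refl) (auto simp: sum_distrib_left intro!: sum.cong)
    also have "\<dots> = (\<Sum>a<n. \<Sum>k<L. if a = p k then c (p k) (p k) - c (p k) (p (Suc k)) else 0)"
    proof (rule sum.cong[OF refl])
      fix a assume a: "a \<in> {..<n}"
      have "(\<Sum>b<n. c a b * E a b) = (\<Sum>k<L. \<Sum>b<n. c a b * (if a = p k then (if b = a then 1 else 0) - (if b = p (Suc k) then 1 else 0) else (0::real)))"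
        unfolding E_def sum_distrib_left by (rule sum.swap)
      also have "\<dots> = (\<Sum>k<L. if a = p k then c (p k) (p k) - c (p k) (p (Suc k)) else 0)"
      proof (intro sum.cong refl)
        fix k assume k: "k \<in> {..<L}"
        have "p (Suc k) < n" using pn k by auto
        then show "(\<Sum>b<n. c a b * (if a = p k then (if b = a then 1 else 0) - (if b = p (Suc k) then 1 else 0) else (0::real)))
          = (if a = p k then c (p k) (p k) - c (p k) (p (Suc k)) else 0)"
          using a by (cases "a = p k") (simp_all add: right_diff_distrib sum_subtractf mult.commute[of "c _ _"] if_distrib[of "\<lambda>x. x * _"] sum.delta cong: if_cong)
      qed
      finally show "(\<Sum>b<n. c a b * E a b) = (\<Sum>k<L. if a = p k then c (p k) (p k) - c (p k) (p (Suc k)) else 0)" .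
    qed
    also have "\<dots> = (\<Sum>k<L. \<Sum>a<n. if a = p k then c (p k) (p k) - c (p k) (p (Suc k)) else 0)"
      by (rule sum.swap)
    also have "\<dots> = (\<Sum>k<L. c (p k) (p k) - c (p k) (p (Suc k)))"
      using pn by (intro sum.cong refl) (simp add: sum.delta)
    finally show ?thesis .
  qed
  have Apos: "A' > 0" using A unfolding AA c_def by simp
  define t where "t = min t0 (A' / (2 * (B + 1)))"
  have tpos: "t > 0" unfolding t_def using t0pos Apos Bnn by simp
  have "t * B \<le> A' / (2 * (B + 1)) * B" using Bnn unfolding t_def by (intro mult_right_mono) auto
  also have "\<dots> \<le> A' / 2" using Bnn Apos by (simp add: field_simps)
  finally have tB: "t * B \<le> A' / 2" .
  have "t * A' - t^2 * B = t * (A' - t * B)" by (simp add: power2_eq_square algebra_simps)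
  also have "\<dots> > 0" using tpos tB Apos by (intro mult_pos_pos) auto
  finally have "objective n \<gamma> F V (\<lambda>a b. q a b + t * D a b) > objective n \<gamma> F V q"
    unfolding expand by simp
  moreover have "feasible n F (\<lambda>a b. q a b + t * D a b)" using tpos by (intro feast) (auto simp: t_def)
  ultimately show ?thesis by blast
qed

theorem mainTheorem12:
  fixes n m :: nat and \<gamma> e1 e2 :: real and F :: "nat \<Rightarrow> real"
    and W qhat :: "nat \<Rightarrow> nat \<Rightarrow> real"
  assumes "n \<le> m"
    and "\<gamma> > 0"
    and "\<forall>i<n. F i > 0" and "(\<Sum>i<n. F i) = 1"
    and "\<forall>i<n. \<forall>j<n. -1 \<le> W i j \<and> W i j \<le> 1"
    and "e1 \<ge> e2" and "e2 \<ge> 0"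
    and "\<forall>i<n. \<forall>j<n. W i i \<ge> max (W i j - e1) (- e2)"
    and "optimal n \<gamma> F (Wtrunc m \<gamma> e1 e2 W) qhat"
  shows "optimal n \<gamma> F W qhat \<and>
    (\<forall>lamh muh pih. KKT n \<gamma> F (Wtrunc m \<gamma> e1 e2 W) qhat lamh muh pih \<longrightarrow>
        (\<exists>lam. KKT n \<gamma> F W qhat lam muh pih))"
proof -
  note nm = assms(1) and g = assms(2) and Fpos = assms(3) and e12 = assms(6) assms(7)
    and diag = assms(8) and opt = assms(9)
  define Wh where "Wh = Wtrunc m \<gamma> e1 e2 W"
  define T where "T = - real m * (e1 + 2*\<gamma>) - e2"
  have Wh: "Wh a b = max (W a b) T" for a b unfolding Wh_def Wtrunc_def T_def by auto
  have feas: "feasible n F qhat" using opt unfolding optimal_def by auto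
  have qnn: "\<forall>a<n. \<forall>b<n. qhat a b \<ge> 0" using feas unfolding feasible_def by auto
  have qle1: "qhat a b \<le> 1" if "a < n" "b < n" for a b
  proof -
    have "qhat a b \<le> (\<Sum>j<n. qhat a j)" using that qnn by (intro member_le_sum) auto
    then show ?thesis using feas that unfolding feasible_def by auto
  qed
  have mg: "real m * (e1 + 2*\<gamma>) \<ge> 0" using g e12 by simp
  have Tle: "T \<le> - e2" unfolding T_def using mg by simp
  have Whdiag: "Wh a a = W a a" if "a < n" for a
  proof -
    have "- e2 \<le> W a a" using diag that by auto
    then show ?thesis using Tle unfolding Wh by simp
  qed
  have Whd: "Wh a a - Wh a b \<ge> - e1" if "a < n" "b < n" for a b
  proof -
    have "W a b - e1 \<le> W a a" "- e2 \<le> W a a" using diag that by auto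
    then show ?thesis using Tle e12 Whdiag[OF that(1)] unfolding Wh by (auto simp: max_def)
  qed
  have key: "Wh a b = W a b" if ab: "a < n" "b < n" "qhat a b > 0" for a b
  proof (rule ccontr)
    assume ne: "Wh a b \<noteq> W a b"
    then have WhT: "Wh a b = T" unfolding Wh by (auto simp: max_def split: if_splits)
    obtain w l where w: "walk n qhat w l" "w 0 = b" "w l = a"
      using reach[OF feas Fpos ab] by blast
    obtain w' l' where w': "walk n qhat w' l'" "w' 0 = b" "w' l' = a" "l' < n"
      using walk_short[OF w(1)] w by metis
    define p where "p k = (if k = 0 then a else w' (k - 1))" for k
    define L where "L = Suc l'"
    have pn: "\<forall>k\<le>L. p k < n" using w' ab unfolding p_def L_def walk_def by auto
    have cyc: "p L = p 0" using w' unfolding p_def L_def by simp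
    have pos: "\<forall>k<L. qhat (p k) (p (Suc k)) > 0"
    proof (intro allI impI)
      fix k assume k: "k < L"
      show "qhat (p k) (p (Suc k)) > 0"
      proof (cases k)
        case 0 then show ?thesis using ab w' unfolding p_def by simp
      next
        case (Suc k') then show ?thesis using w' k unfolding p_def L_def walk_def by auto
      qed
    qed
    define h where "h k = (Wh (p k) (p k) - \<gamma> * qhat (p k) (p k)) - (Wh (p k) (p (Suc k)) - \<gamma> * qhat (p k) (p (Suc k)))" for k
    have hk: "h k \<ge> - e1 - \<gamma>" if "k < L" for k
    proof -
      have "p k < n" "p (Suc k) < n" using pn that by auto
      then have "Wh (p k) (p k) - Wh (p k) (p (Suc k)) \<ge> - e1"
        "\<gamma> * qhat (p k) (p k) \<le> \<gamma>" "\<gamma> * qhat (p k) (p (Suc k)) \<ge> 0"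
        using Whd[of "p k" "p (Suc k)"] qle1[of "p k" "p k"] qnn g by auto
      then show ?thesis unfolding h_def by linarith
    qed
    have h0: "h 0 \<ge> real m * (e1 + 2*\<gamma>) - \<gamma>"
    proof -
      have "p 0 = a" "p (Suc 0) = b" using w' unfolding p_def by auto
      moreover have "Wh a a - Wh a b \<ge> real m * (e1 + 2*\<gamma>)"
      proof -
        have "- e2 \<le> W a a" using diag ab by auto
        then show ?thesis using Whdiag[OF ab(1)] WhT unfolding T_def by linarith
      qed
      moreover have "\<gamma> * qhat a a \<le> \<gamma>" using qle1[of a a] ab g by simp
      moreover have "\<gamma> * qhat a b \<ge> 0" using qnn ab g by simp
      ultimately show ?thesis unfolding h_def by simp
    qed
    have s1: "(\<Sum>k<L. h k) = h 0 + (\<Sum>k<l'. h (Suc k))" unfolding L_def by (rule sum.lessThan_Suc_shift)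
    have s2: "(\<Sum>k<l'. h (Suc k)) \<ge> (\<Sum>k<l'. - e1 - \<gamma>)"
      using hk unfolding L_def by (intro sum_mono) auto
    have s3: "(\<Sum>k<l'. - e1 - \<gamma>) = - real l' * (e1 + \<gamma>)" by (simp add: algebra_simps)
    from s1 s2 s3 h0 have "(\<Sum>k<L. h k) \<ge> real m * (e1 + 2*\<gamma>) - \<gamma> - real l' * (e1 + \<gamma>)"
      by linarith
    moreover have "real l' * (e1 + \<gamma>) \<le> (real m - 1) * (e1 + \<gamma>)"
      using w'(4) nm g e12 by (intro mult_right_mono) auto
    ultimately have "(\<Sum>k<L. h k) \<ge> e1 + real m * \<gamma>" by (simp add: algebra_simps)
    moreover have "real m * \<gamma> > 0" using nm ab g by simp
    ultimately have A: "(\<Sum>k<L. h k) > 0" using e12 by linarith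
    obtain q' where "feasible n F q'" "objective n \<gamma> F Wh q' > objective n \<gamma> F Wh qhat"
      using improve[OF feas Fpos g pn cyc pos A[unfolded h_def]] by blast
    then show False using opt unfolding Wh_def optimal_def by (meson not_le)
  qed
  have zero: "(W a b - Wh a b) * qhat a b = 0" if "a < n" "b < n" for a b
  proof (cases "qhat a b > 0")
    case True then show ?thesis using key[OF that] by simp
  next
    case False then have "qhat a b = 0" using qnn that by (meson antisym not_le)
    then show ?thesis by simp
  qed
  have WleWh: "W a b \<le> Wh a b" for a b unfolding Wh by simp
  have obj_le: "objective n \<gamma> F W q \<le> objective n \<gamma> F Wh q" if "feasible n F q" for q
    unfolding objective_def
  proof (rule sum_mono, rule mult_left_mono)
    fix i assume i: "i \<in> {..<n}"
    show "(\<Sum>j<n. W i j * q i j) - phi \<gamma> n (q i) \<le> (\<Sum>j<n. Wh i j * q i j) - phi \<gamma> n (q i)"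
      using that i WleWh unfolding feasible_def by (auto intro!: sum_mono mult_right_mono)
    show "F i \<ge> 0" using Fpos i by (simp add: less_imp_le)
  qed
  have obj_eq: "objective n \<gamma> F W qhat = objective n \<gamma> F Wh qhat"
    unfolding objective_def
  proof (rule sum.cong[OF refl])
    fix i assume i: "i \<in> {..<n}"
    have "(\<Sum>j<n. W i j * qhat i j) = (\<Sum>j<n. Wh i j * qhat i j)"
      using zero[of i] i by (intro sum.cong refl) (auto simp: algebra_simps)
    then show "F i * ((\<Sum>j<n. W i j * qhat i j) - phi \<gamma> n (qhat i)) = F i * ((\<Sum>j<n. Wh i j * qhat i j) - phi \<gamma> n (qhat i))"
      by simp
  qed
  have P1: "optimal n \<gamma> F W qhat"
    unfolding optimal_def using feas obj_le obj_eq opt unfolding optimal_def Wh_def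
    by (metis order.trans)
  have P2: "\<exists>lam. KKT n \<gamma> F W qhat lam muh pih" if "KKT n \<gamma> F Wh qhat lamh muh pih" for lamh muh pih
  proof
    show "KKT n \<gamma> F W qhat (\<lambda>a b. lamh a b + F a * (W a b - Wh a b)) muh pih"
      unfolding KKT_def
    proof (intro allI impI conjI)
      fix i j assume ij: "i < n" "j < n"
      have k: "F i * (Wh i j - \<gamma> * qhat i j) = lamh i j + muh i + F i * pih j" "lamh i j \<le> 0" "lamh i j * qhat i j = 0"
        using that ij unfolding KKT_def by auto
      show "F i * (W i j - \<gamma> * qhat i j) = lamh i j + F i * (W i j - Wh i j) + muh i + F i * pih j"
        using k(1) by (simp add: algebra_simps)
      have "F i * (W i j - Wh i j) \<le> 0" using Fpos ij WleWh[of i j] by (simp add: mult_nonneg_nonpos less_imp_le)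
      then show "lamh i j + F i * (W i j - Wh i j) \<le> 0" using k(2) by simp
      show "(lamh i j + F i * (W i j - Wh i j)) * qhat i j = 0"
      proof -
        have "(lamh i j + F i * (W i j - Wh i j)) * qhat i j = lamh i j * qhat i j + F i * ((W i j - Wh i j) * qhat i j)"
          by (simp add: algebra_simps)
        then show ?thesis using k(3) zero[OF ij] by simp
      qed
    qed
  qed
  show ?thesis using P1 P2 unfolding Wh_def by blast
qed

end
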